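(* Let $\mathcal A\subseteq\mathbb T$, let $\Phi:\mathcal A\to\mathcal A$ be a function, and let $\boldsymbol\alpha$ be a ratio set. Assume: (a) if $\boldsymbol\alpha$ witnesses $S\in\mathcal A$, then $\boldsymbol\alpha$ witnesses $\Phi(S)$; (b) if $S,T\in\mathcal A$ and $\boldsymbol\alpha$ witnesses $S-T$, then $\boldsymbol\alpha$ witnesses $\Phi(S)-\Phi(T)$ and $S-T\succ^{\boldsymbol\alpha}\Phi(S)-\Phi(T)$; (c) if $T_j\in\mathcal A$ ($j=1,2,\dots$) and $T_j$ converges $\boldsymbol\alpha$-geometrically to $T$, then $T\in\mathcal A$; (d) there exists $T_0\in\mathcal A$ such that $\boldsymbol\alpha$ witnesses both $T_0$ and $\Phi(T_0)-T_0$. Then there is $S\in\mathcal A$ with $S=\Phi(S)$.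
   Context: $\mathbb T$ is the field of real grid-based transseries over the ordered group $\mathfrak G$ of transmonomials; $\operatorname{mag}T$ is the dominant monomial of $T\neq0$. A ratio set is a finite $\boldsymbol\alpha\subset\{\mathfrak g\in\mathfrak G:\mathfrak g\prec1\}$; $\boldsymbol\alpha^*$ (resp. $\boldsymbol\alpha^+$) is the set of products of zero or more (resp. one or more) elements of $\boldsymbol\alpha$. For monomials $\mathfrak m\prec^{\boldsymbol\alpha}\mathfrak n$ iff $\mathfrak m/\mathfrak n\in\boldsymbol\alpha^+$; for transseries $A\prec^{\boldsymbol\alpha}B$ (equivalently $B\succ^{\boldsymbol\alpha}A$) iff every $\mathfrak a\in\operatorname{supp}A$ satisfies $\mathfrak a\prec^{\boldsymbol\alpha}\mathfrak b$ for some $\mathfrak b\in\operatorname{supp}B$. $\boldsymbol\alpha$ witnesses a nonzero $T$ iff $\operatorname{supp}T\subseteq(\operatorname{mag}T)\boldsymbol\alpha^*$. A sequence $T_j$ converges $\boldsymbol\alpha$-geometrically to $T$ if for all $j$, $\boldsymbol\alpha$ witnesses $T-T_j$ and $T-T_j\succ^{\boldsymbol\alpha}T-T_{j+1}$. *)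

theory Defs
  imports Complex_Main
begin

text \<open>The monomial group is written additively: the product of monomials m n is m + n,
  the unit monomial 1 is 0, and m \<prec> n is m < n (so "small" monomials are the
  negative elements).\<close>

type_synonym 'g series = "'g \<Rightarrow> real"

definition supp :: "'g series \<Rightarrow> 'g set" where
  "supp T = {g. T g \<noteq> 0}"

definition mstar :: "'g::comm_monoid_add set \<Rightarrow> 'g set" where
  "mstar \<alpha> = {sum_list xs | xs. set xs \<subseteq> \<alpha>}"

definition mplus :: "'g::comm_monoid_add set \<Rightarrow> 'g set" where
  "mplus \<alpha> = {sum_list xs | xs. xs \<noteq> [] \<and> set xs \<subseteq> \<alpha>}"

definition grid_based :: "'g::linordered_ab_group_add series \<Rightarrow> bool" where
  "grid_based T \<longleftrightarrow> (\<exists>\<mu> m. finite \<mu> \<and> (\<forall>x\<in>\<mu>. x < 0) \<and>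
      supp T \<subseteq> {m + s | s. s \<in> mstar \<mu>})"

definition mag :: "'g::linorder series \<Rightarrow> 'g" where
  "mag T = (GREATEST g. g \<in> supp T)"

definition ratio_set :: "'g::linordered_ab_group_add set \<Rightarrow> bool" where
  "ratio_set \<alpha> \<longleftrightarrow> finite \<alpha> \<and> (\<forall>g\<in>\<alpha>. g < 0)"

definition mono_prec :: "'g::ab_group_add set \<Rightarrow> 'g \<Rightarrow> 'g \<Rightarrow> bool" where
  "mono_prec \<alpha> m n \<longleftrightarrow> m - n \<in> mplus \<alpha>"

definition ser_prec :: "'g::ab_group_add set \<Rightarrow> 'g series \<Rightarrow> 'g series \<Rightarrow> bool" where
  "ser_prec \<alpha> A B \<longleftrightarrow> (\<forall>a\<in>supp A. \<exists>b\<in>supp B. mono_prec \<alpha> a b)"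

definition witnesses :: "'g::linordered_ab_group_add set \<Rightarrow> 'g series \<Rightarrow> bool" where
  "witnesses \<alpha> T \<longleftrightarrow> T \<noteq> (\<lambda>_. 0) \<and> supp T \<subseteq> {mag T + s | s. s \<in> mstar \<alpha>}"

definition geom_conv :: "'g::linordered_ab_group_add set \<Rightarrow> (nat \<Rightarrow> 'g series) \<Rightarrow> 'g series \<Rightarrow> bool" where
  "geom_conv \<alpha> Ts T \<longleftrightarrow> (\<forall>j. witnesses \<alpha> (T - Ts j) \<and> ser_prec \<alpha> (T - Ts (Suc j)) (T - Ts j))"

end

theory Submission
  imports Defs "HOL-Library.Multiset"
begin

definition Lk :: "'g::comm_monoid_add set \<Rightarrow> nat \<Rightarrow> 'g set" where
  "Lk \<alpha> k = {sum_list xs | xs. set xs \<subseteq> \<alpha> \<and> k \<le> length xs}"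

lemma mstar_Lk: "mstar \<alpha> = Lk \<alpha> 0" unfolding mstar_def Lk_def by auto

lemma mplus_Lk: "mplus \<alpha> = Lk \<alpha> 1"
  unfolding mplus_def Lk_def by (auto simp: Suc_le_eq)

lemma Lk_add: "x \<in> Lk \<alpha> a \<Longrightarrow> y \<in> Lk \<alpha> b \<Longrightarrow> x + y \<in> Lk \<alpha> (a + b)"
  unfolding Lk_def apply clarify
  subgoal for xs ys by (rule exI[of _ "xs @ ys"]) auto
  done

lemma Lk_mono: "k \<le> k' \<Longrightarrow> Lk \<alpha> k' \<subseteq> Lk \<alpha> k" unfolding Lk_def by auto

lemma sum_list_nonpos': "(\<forall>x\<in>set xs. x \<le> (0::'g::ordered_comm_monoid_add)) \<Longrightarrow> sum_list xs \<le> 0"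
  by (induction xs) (auto intro: add_nonpos_nonpos)

lemma sum_list_neg: "(\<forall>x\<in>set xs. x < (0::'g::linordered_ab_group_add)) \<Longrightarrow> xs \<noteq> [] \<Longrightarrow> sum_list xs < 0"
proof (induction xs)
  case Nil then show ?case by simp
next
  case (Cons x xs)
  have "sum_list xs \<le> 0" using Cons.prems by (intro sum_list_nonpos') auto
  then show ?case using Cons.prems by (simp add: add_neg_nonpos)
qed

lemma Lk_nonpos: "ratio_set \<alpha> \<Longrightarrow> x \<in> Lk \<alpha> k \<Longrightarrow> x \<le> 0"
  unfolding Lk_def ratio_set_def by (auto intro!: sum_list_nonpos' simp: less_imp_le subset_iff)

lemma Lk_neg: "ratio_set \<alpha> \<Longrightarrow> x \<in> Lk \<alpha> k \<Longrightarrow> 0 < k \<Longrightarrow> x < 0"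
  unfolding Lk_def ratio_set_def by (auto intro!: sum_list_neg simp: subset_iff)

lemma sum_mset_nonpos': "(\<forall>x\<in>#A. x \<le> (0::'g::ordered_comm_monoid_add)) \<Longrightarrow> sum_mset A \<le> 0"
  by (induction A) (auto intro: add_nonpos_nonpos)

lemma sum_mset_neg: "(\<forall>x\<in>#A. x < (0::'g::linordered_ab_group_add)) \<Longrightarrow> A \<noteq> {#} \<Longrightarrow> sum_mset A < 0"
proof (induction A)
  case empty then show ?case by simp
next
  case (add x A)
  have "sum_mset A \<le> 0" using add.prems by (intro sum_mset_nonpos') auto
  then show ?case using add.prems by (simp add: add_neg_nonpos)
qed

lemma subset_sum:
  assumes "M \<subseteq># N" "\<forall>x\<in>#N. x < (0::'g::linordered_ab_group_add)" "M \<noteq> N"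
  shows "sum_mset N < sum_mset M"
proof -
  have N: "N = M + (N - M)" using assms(1) by (simp add: subset_mset.add_diff_inverse)
  have "N - M \<noteq> {#}" using assms(3) N by (metis add.right_neutral)
  moreover have "\<forall>x\<in>#N - M. x < 0" using assms(2) by (auto dest: in_diffD)
  ultimately have "sum_mset (N - M) < 0" by (rule sum_mset_neg[rotated])
  then show ?thesis by (subst N) simp
qed

lemma subset_sum_le:
  assumes "M \<subseteq># N" "\<forall>x\<in>#N. x < (0::'g::linordered_ab_group_add)"
  shows "sum_mset N \<le> sum_mset M"
  using subset_sum[OF assms] by (cases "M = N") auto

lemma nat_mono_sub: "\<exists>r::nat\<Rightarrow>nat. strict_mono r \<and> (\<forall>m n::nat. m \<le> n \<longrightarrow> (s::nat\<Rightarrow>nat) (r m) \<le> s (r n))"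
proof -
  obtain f :: "nat \<Rightarrow> nat" where f: "strict_mono f" "monoseq (\<lambda>n. s (f n))" using seq_monosub by blast
  show ?thesis
  proof (cases "\<forall>m n::nat. m \<le> n \<longrightarrow> s (f m) \<le> s (f n)")
    case True thus ?thesis using f by blast
  next
    case False
    then have dec: "\<forall>m n::nat. m \<le> n \<longrightarrow> s (f n) \<le> s (f m)" using f(2) unfolding monoseq_def by blast
    define v where "v = (LEAST v. v \<in> range (\<lambda>n. s (f n)))"
    have "v \<in> range (\<lambda>n. s (f n))" unfolding v_def by (rule LeastI) auto
    then obtain k where k: "s (f k) = v" by auto
    have vmin: "v \<le> s (f i)" for i unfolding v_def by (rule Least_le) auto
    have "strict_mono (\<lambda>n. f (n + k))" using f(1) by (simp add: strict_mono_def)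
    moreover have "\<forall>m n::nat. m \<le> n \<longrightarrow> s (f (m + k)) \<le> s (f (n + k))"
    proof (intro allI impI)
      fix m n :: nat
      have "s (f (m + k)) \<le> s (f k)" using dec by simp
      also have "\<dots> \<le> s (f (n + k))" using k vmin by simp
      finally show "s (f (m + k)) \<le> s (f (n + k))" .
    qed
    ultimately show ?thesis by blast
  qed
qed

lemma dickson:
  fixes f :: "nat \<Rightarrow> 'a \<Rightarrow> nat"
  assumes "finite I"
  shows "\<exists>r::nat\<Rightarrow>nat. strict_mono r \<and> (\<forall>m n::nat. m \<le> n \<longrightarrow> (\<forall>i\<in>I. f (r m) i \<le> f (r n) i))"
  using assms
proof (induction I arbitrary: f rule: finite_induct)
  case empty
  have "strict_mono (id::nat\<Rightarrow>nat)" by (simp add: strict_mono_def)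
  thus ?case by blast
next
  case (insert a I)
  obtain r1 :: "nat \<Rightarrow> nat" where r1: "strict_mono r1" "\<forall>m n::nat. m \<le> n \<longrightarrow> (\<forall>i\<in>I. f (r1 m) i \<le> f (r1 n) i)"
    using insert.IH[of f] by blast
  obtain r2 :: "nat \<Rightarrow> nat" where r2: "strict_mono r2" "\<forall>m n::nat. m \<le> n \<longrightarrow> f (r1 (r2 m)) a \<le> f (r1 (r2 n)) a"
    using nat_mono_sub[of "\<lambda>n. f (r1 n) a"] by blast
  have "strict_mono (r1 \<circ> r2)" using r1(1) r2(1) by (simp add: strict_mono_def)
  moreover have "\<forall>m n::nat. m \<le> n \<longrightarrow> (\<forall>i\<in>insert a I. f ((r1\<circ>r2) m) i \<le> f ((r1\<circ>r2) n) i)"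
  proof (intro allI impI ballI)
    fix m n :: nat and i assume mn: "m \<le> n" and i: "i \<in> insert a I"
    have "r2 m \<le> r2 n" using r2(1) mn by (simp add: strict_mono_less_eq)
    show "f ((r1\<circ>r2) m) i \<le> f ((r1\<circ>r2) n) i"
    proof (cases "i = a")
      case True thus ?thesis using r2(2) mn by simp
    next
      case False thus ?thesis using r1(2) \<open>r2 m \<le> r2 n\<close> i by simp
    qed
  qed
  ultimately show ?case by blast
qed

lemma dickson_mset:
  fixes M :: "nat \<Rightarrow> 'a multiset"
  assumes "finite \<alpha>" "\<forall>k. set_mset (M k) \<subseteq> \<alpha>"
  shows "\<exists>r::nat\<Rightarrow>nat. strict_mono r \<and> (\<forall>m n::nat. m \<le> n \<longrightarrow> M (r m) \<subseteq># M (r n))"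
proof -
  obtain r :: "nat \<Rightarrow> nat" where r: "strict_mono r"
    "\<forall>m n::nat. m \<le> n \<longrightarrow> (\<forall>i\<in>\<alpha>. count (M (r m)) i \<le> count (M (r n)) i)"
    using dickson[OF assms(1), of "\<lambda>k i. count (M k) i"] by blast
  have "M (r m) \<subseteq># M (r n)" if "m \<le> n" for m n
    unfolding subseteq_mset_def
  proof
    fix i show "count (M (r m)) i \<le> count (M (r n)) i"
    proof (cases "i \<in> \<alpha>")
      case True thus ?thesis using r(2) that by blast
    next
      case False then have "i \<notin># M (r m)" using assms(2) by blast
      thus ?thesis by (simp add: not_in_iff)
    qed
  qed
  thus ?thesis using r(1) by blast
qed

lemma Lk0_max:
  assumes ra: "ratio_set \<alpha>" and Q: "Q \<subseteq> Lk \<alpha> 0" "Q \<noteq> {}"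
  shows "\<exists>z\<in>Q. \<forall>y\<in>Q. y \<le> z"
proof -
  define r where "r = {(x,y). x \<in> Lk \<alpha> 0 \<and> y \<in> Lk \<alpha> 0 \<and> y < x}"
  have "wf r"
  proof (rule ccontr)
    assume "\<not> wf r"
    then obtain f where f: "\<forall>i. (f (Suc i), f i) \<in> r" using wf_iff_no_infinite_down_chain by blast
    hence fin: "\<forall>i. f i \<in> Lk \<alpha> 0" and inc: "\<forall>i. f i < f (Suc i)" by (auto simp: r_def)
    have sm: "strict_mono f" using inc by (simp add: strict_mono_Suc_iff)
    have "\<forall>i. \<exists>xs. set xs \<subseteq> \<alpha> \<and> f i = sum_list xs" using fin unfolding Lk_def by blast
    then have "\<exists>xs. \<forall>i. set (xs i) \<subseteq> \<alpha> \<and> f i = sum_list (xs i)" by (rule choice)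
    then obtain xs where xs: "\<forall>i. set (xs i) \<subseteq> \<alpha> \<and> f i = sum_list (xs i)" by blast
    obtain q :: "nat \<Rightarrow> nat" where q: "strict_mono q" "\<forall>m n::nat. m \<le> n \<longrightarrow> mset (xs (q m)) \<subseteq># mset (xs (q n))"
      using dickson_mset[of \<alpha> "\<lambda>i. mset (xs i)"] ra xs unfolding ratio_set_def by auto
    have neg: "\<forall>x\<in># mset (xs (q 1)). x < 0" using xs ra unfolding ratio_set_def by auto
    have "sum_mset (mset (xs (q 1))) \<le> sum_mset (mset (xs (q 0)))"
      using subset_sum_le[OF q(2)[rule_format, of 0 1] neg] by simp
    hence "f (q 1) \<le> f (q 0)" using xs by (simp add: sum_mset_sum_list)
    moreover have "f (q 0) < f (q 1)" using sm q(1) by (simp add: strict_mono_def)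
    ultimately show False by simp
  qed
  then obtain z where z: "z \<in> Q" "\<forall>y. (y, z) \<in> r \<longrightarrow> y \<notin> Q"
    using Q(2) unfolding wf_eq_minimal by blast
  have "\<forall>y\<in>Q. y \<le> z"
  proof
    fix y assume "y \<in> Q"
    show "y \<le> z"
    proof (rule ccontr)
      assume "\<not> y \<le> z"
      hence "z < y" by simp
      moreover have "y \<in> Lk \<alpha> 0" "z \<in> Lk \<alpha> 0" using \<open>y \<in> Q\<close> z(1) Q(1) by auto
      ultimately have "(y, z) \<in> r" unfolding r_def by simp
      thus False using z(2) \<open>y \<in> Q\<close> by blast
    qed
  qed
  thus ?thesis using z by blast
qed

lemma Lk_fin:
  assumes ra: "ratio_set \<alpha>" and all: "\<forall>k. x \<in> Lk \<alpha> k"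
  shows False
proof -
  have "\<forall>k. \<exists>xs. set xs \<subseteq> \<alpha> \<and> k \<le> length xs \<and> x = sum_list xs" using all unfolding Lk_def by blast
  then have "\<exists>xs. \<forall>k. set (xs k) \<subseteq> \<alpha> \<and> k \<le> length (xs k) \<and> x = sum_list (xs k)" by (rule choice)
  then obtain xs where xs: "\<forall>k. set (xs k) \<subseteq> \<alpha> \<and> k \<le> length (xs k) \<and> x = sum_list (xs k)" by blast
  obtain r :: "nat \<Rightarrow> nat" where r: "strict_mono r" "\<forall>m n::nat. m \<le> n \<longrightarrow> mset (xs (r m)) \<subseteq># mset (xs (r n))"
    using dickson_mset[of \<alpha> "\<lambda>k. mset (xs k)"] ra xs unfolding ratio_set_def by auto
  define n where "n = Suc (length (xs (r 0)))"
  have "n \<le> r n" using r(1) by (simp add: strict_mono_imp_increasing)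
  moreover have "r n \<le> length (xs (r n))" using xs by blast
  ultimately have "length (xs (r 0)) < length (xs (r n))" unfolding n_def by linarith
  hence ne: "mset (xs (r 0)) \<noteq> mset (xs (r n))" by (metis size_mset less_irrefl)
  have neg: "\<forall>y\<in># mset (xs (r n)). y < 0" using xs ra unfolding ratio_set_def by auto
  have "sum_mset (mset (xs (r n))) < sum_mset (mset (xs (r 0)))"
    using subset_sum[OF r(2)[rule_format, of 0 n] neg ne] by simp
  thus False using xs by (simp add: sum_mset_sum_list)
qed

lemma witI:
  assumes ra: "ratio_set \<alpha>" and c: "c \<in> supp R" and sub: "\<forall>x\<in>supp R. x - c \<in> Lk \<alpha> 0"
  shows "witnesses \<alpha> R"
proof -
  have le: "\<forall>x\<in>supp R. x \<le> c" using sub Lk_nonpos[OF ra] by (metis diff_le_0_iff_le)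
  have "mag R = c" unfolding mag_def by (rule Greatest_equality) (use c le in auto)
  moreover have "R \<noteq> (\<lambda>_. 0)" using c by (auto simp: supp_def)
  moreover have "supp R \<subseteq> {c + s | s. s \<in> mstar \<alpha>}"
  proof
    fix x assume "x \<in> supp R"
    then have "x - c \<in> mstar \<alpha>" using sub mstar_Lk by auto
    moreover have "x = c + (x - c)" by simp
    ultimately show "x \<in> {c + s | s. s \<in> mstar \<alpha>}" by blast
  qed
  ultimately show ?thesis unfolding witnesses_def by simp
qed

lemma witD:
  assumes "witnesses \<alpha> R"
  shows "\<forall>x\<in>supp R. x - mag R \<in> Lk \<alpha> 0"
  using assms unfolding witnesses_def mstar_Lk by auto

lemma mag_in:
  assumes ra: "ratio_set \<alpha>" and w: "witnesses \<alpha> R"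
  shows "mag R \<in> supp R"
proof -
  let ?Q = "(\<lambda>x. x - mag R) ` supp R"
  have "?Q \<subseteq> Lk \<alpha> 0" using witD[OF w] by auto
  moreover have "supp R \<noteq> {}" using w unfolding witnesses_def supp_def by auto
  ultimately obtain z where z: "z \<in> ?Q" "\<forall>y\<in>?Q. y \<le> z" using Lk0_max[OF ra] by blast
  then obtain c where c: "c \<in> supp R" "z = c - mag R" by auto
  have "\<forall>x\<in>supp R. x \<le> c" using z c by auto
  hence "mag R = c" unfolding mag_def by (intro Greatest_equality) (use c in auto)
  thus ?thesis using c by simp
qed

lemma grid2:
  assumes ra: "ratio_set \<alpha>" and h: "\<forall>x\<in>supp T. x - a \<in> Lk \<alpha> 0 \<or> x - b \<in> Lk \<alpha> 0"
  shows "grid_based T"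
proof -
  define m where "m = max a b"
  define c where "c = min a b - max a b"
  define \<mu> where "\<mu> = \<alpha> \<union> ({c} \<inter> {x. x < 0})"
  have fin: "finite \<mu>" and neg: "\<forall>x\<in>\<mu>. x < 0" using ra by (auto simp: \<mu>_def ratio_set_def)
  have key: "x - m \<in> mstar \<mu>" if "x \<in> supp T" for x
  proof -
    have gen: "x - m \<in> mstar \<mu>" if p: "p = a \<or> p = b" "x - p \<in> Lk \<alpha> 0" for p
    proof -
      obtain xs where xs: "set xs \<subseteq> \<alpha>" "x - p = sum_list xs" using p(2) unfolding Lk_def by auto
      show ?thesis
      proof (cases "p = m")
        case True thus ?thesis using xs unfolding mstar_def \<mu>_def by auto
      next
        case False
        hence "p = min a b" "c < 0" using p(1) unfolding m_def c_def by (cases "a \<le> b"; auto simp: min_def max_def)+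
        hence cm: "c \<in> \<mu>" and eq: "x - m = sum_list (c # xs)"
          using xs unfolding \<mu>_def c_def m_def by (auto simp: algebra_simps)
        show ?thesis unfolding mstar_def using eq cm xs \<mu>_def
          by (intro CollectI exI[of _ "c # xs"]) auto
      qed
    qed
    show ?thesis using h that gen by blast
  qed
  have "supp T \<subseteq> {m + s | s. s \<in> mstar \<mu>}"
  proof
    fix x assume "x \<in> supp T"
    then have "x - m \<in> mstar \<mu>" by (rule key)
    moreover have "x = m + (x - m)" by simp
    ultimately show "x \<in> {m + s | s. s \<in> mstar \<mu>}" by blast
  qed
  thus ?thesis unfolding grid_based_def using fin neg by blast
qed

theorem proposition6p1:
  fixes \<A> :: "('g::linordered_ab_group_add) series set"
    and \<Phi> :: "'g series \<Rightarrow> 'g series"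
    and \<alpha> :: "'g set"
  assumes A_sub: "\<forall>T\<in>\<A>. grid_based T"
    and Phi_maps: "\<forall>S\<in>\<A>. \<Phi> S \<in> \<A>"
    and ratio: "ratio_set \<alpha>"
    and a: "\<And>S. S \<in> \<A> \<Longrightarrow> witnesses \<alpha> S \<Longrightarrow> witnesses \<alpha> (\<Phi> S)"
    and b: "\<And>S T. S \<in> \<A> \<Longrightarrow> T \<in> \<A> \<Longrightarrow> witnesses \<alpha> (S - T) \<Longrightarrow>
              witnesses \<alpha> (\<Phi> S - \<Phi> T) \<and> ser_prec \<alpha> (\<Phi> S - \<Phi> T) (S - T)"
    and c: "\<And>Ts T. (\<forall>j. Ts j \<in> \<A>) \<Longrightarrow> grid_based T \<Longrightarrow> geom_conv \<alpha> Ts T \<Longrightarrow> T \<in> \<A>"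
    and d: "\<exists>T0\<in>\<A>. witnesses \<alpha> T0 \<and> witnesses \<alpha> (\<Phi> T0 - T0)"
  shows "\<exists>S\<in>\<A>. S = \<Phi> S"
proof -
  obtain T0 where T0: "T0 \<in> \<A>" "witnesses \<alpha> T0" "witnesses \<alpha> (\<Phi> T0 - T0)" using d by blast
  define X where "X j = (\<Phi> ^^ j) T0" for j
  define D where "D j = X (Suc j) - X j" for j
  define m where "m j = mag (D j)" for j
  have XS: "X (Suc j) = \<Phi> (X j)" for j by (simp add: X_def)
  have X0: "X 0 = T0" by (simp add: X_def)
  have XA: "X j \<in> \<A>" for j
    by (induction j) (auto simp: X0 XS T0(1) Phi_maps)
  have DW: "witnesses \<alpha> (D j)" for j
  proof (induction j)
    case 0 show ?case unfolding D_def XS X0 by (rule T0(3))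
  next
    case (Suc j)
    have "witnesses \<alpha> (\<Phi> (X (Suc j)) - \<Phi> (X j))" using b[OF XA XA] Suc unfolding D_def by blast
    thus ?case unfolding D_def XS .
  qed
  have DP: "ser_prec \<alpha> (D (Suc j)) (D j)" for j
  proof -
    have "ser_prec \<alpha> (\<Phi> (X (Suc j)) - \<Phi> (X j)) (X (Suc j) - X j)"
      using b[OF XA XA] DW[of j] unfolding D_def by blast
    thus ?thesis unfolding D_def XS .
  qed
  have mIn: "m j \<in> supp (D j)" for j unfolding m_def by (rule mag_in[OF ratio DW])
  have F4: "\<forall>a\<in>supp (D i). a - m j \<in> Lk \<alpha> (i - j)" if "j \<le> i" for i j
    using that
  proof (induction i rule: dec_induct)
    case base
    show ?case using witD[OF DW[of j]] by (simp add: m_def)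
  next
    case (step i)
    show ?case
    proof
      fix a assume "a \<in> supp (D (Suc i))"
      then obtain b' where b': "b' \<in> supp (D i)" "a - b' \<in> Lk \<alpha> 1"
        using DP[of i] unfolding ser_prec_def mono_prec_def mplus_Lk by blast
      have "(b' - m j) + (a - b') \<in> Lk \<alpha> (i - j + 1)" using step.IH b' by (intro Lk_add) auto
      moreover have "i - j + 1 = Suc i - j" using step.hyps by simp
      ultimately show "a - m j \<in> Lk \<alpha> (Suc i - j)" by (simp add: algebra_simps)
    qed
  qed
  have F5: "\<forall>a\<in>supp (D i). a - m 0 \<in> Lk \<alpha> j" if "j \<le> i" for i j
    using F4[of 0 i] Lk_mono[OF that, of \<alpha>] by auto
  have Dz: "\<exists>n. \<forall>i\<ge>n. D i g = 0" for g
  proof (rule ccontr)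
    assume "\<not> (\<exists>n. \<forall>i\<ge>n. D i g = 0)"
    hence "\<forall>k. g - m 0 \<in> Lk \<alpha> k" using F5 unfolding supp_def by blast
    thus False by (rule Lk_fin[OF ratio])
  qed
  define N where "N g = (SOME n. \<forall>i\<ge>n. D i g = 0)" for g
  have N: "D i g = 0" if "N g \<le> i" for i g
    using someI_ex[OF Dz[of g]] that unfolding N_def by blast
  define T where "T g = X (N g) g" for g
  have XD: "X (Suc n) g = X n g + D n g" for n g by (simp add: D_def)
  have XT: "X n g = T g" if "N g \<le> n" for n g
    using that
  proof (induction n rule: dec_induct)
    case base show ?case by (simp add: T_def)
  next
    case (step n) thus ?case using N[of g n] XD[of n g] by simp
  qed
  have tele: "X n g - X j g = (\<Sum>i\<in>{j..<n}. D i g)" if "j \<le> n" for n j g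
    using that
  proof (induction n rule: dec_induct)
    case base show ?case by simp
  next
    case (step n) thus ?case using XD[of n g] by simp
  qed
  define R where "R j = T - X j" for j
  have Rg: "R j g = (\<Sum>i\<in>{j..<max (Suc j) (N g)}. D i g)" for j g
  proof -
    have "R j g = X (max (Suc j) (N g)) g - X j g" unfolding R_def using XT[of g "max (Suc j) (N g)"] by simp
    thus ?thesis using tele[of j "max (Suc j) (N g)" g] by simp
  qed
  have Rsupp: "\<exists>i\<ge>j. D i g \<noteq> 0" if "R j g \<noteq> 0" for j g
  proof -
    have "(\<Sum>i\<in>{j..<max (Suc j) (N g)}. D i g) \<noteq> 0" using that Rg by simp
    then obtain i where "i \<in> {j..<max (Suc j) (N g)}" "D i g \<noteq> 0"
      by (rule sum.not_neutral_contains_not_neutral)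
    thus ?thesis by auto
  qed
  have Rm: "R j (m j) = D j (m j)" for j
  proof -
    have z: "D i (m j) = 0" if "Suc j \<le> i" for i
    proof (rule ccontr)
      assume "D i (m j) \<noteq> 0"
      hence "m j - m j \<in> Lk \<alpha> (i - j)" using F4[of j i] that unfolding supp_def by auto
      hence "m j - m j < 0" using Lk_neg[OF ratio, of "m j - m j" "i - j"] that by simp
      thus False by simp
    qed
    have "R j (m j) = D j (m j) + (\<Sum>i\<in>{Suc j..<max (Suc j) (N (m j))}. D i (m j))"
      using Rg[of j "m j"] by (simp add: sum.atLeast_Suc_lessThan)
    also have "(\<Sum>i\<in>{Suc j..<max (Suc j) (N (m j))}. D i (m j)) = 0"
      using z by (intro sum.neutral) auto
    finally show ?thesis by simp
  qed
  have RIn: "m j \<in> supp (R j)" for j using Rm mIn unfolding supp_def by simp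
  have Rsub: "\<forall>x\<in>supp (R j). x - m j \<in> Lk \<alpha> 0 \<and> x - m 0 \<in> Lk \<alpha> j" for j
  proof
    fix x assume "x \<in> supp (R j)"
    then obtain i where i: "j \<le> i" "D i x \<noteq> 0" using Rsupp unfolding supp_def by blast
    have "x - m j \<in> Lk \<alpha> (i - j)" using F4[OF i(1)] i(2) unfolding supp_def by auto
    hence "x - m j \<in> Lk \<alpha> 0" using Lk_mono[of 0 "i - j" \<alpha>] by auto
    moreover have "x - m 0 \<in> Lk \<alpha> j" using F5[OF i(1)] i(2) unfolding supp_def by auto
    ultimately show "x - m j \<in> Lk \<alpha> 0 \<and> x - m 0 \<in> Lk \<alpha> j" by simp
  qed
  have RW: "witnesses \<alpha> (R j)" for j
    using witI[OF ratio RIn] Rsub by blast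
  have RP: "ser_prec \<alpha> (R (Suc j)) (R j)" for j
    unfolding ser_prec_def mono_prec_def mplus_Lk
  proof
    fix x assume "x \<in> supp (R (Suc j))"
    then obtain i where i: "Suc j \<le> i" "D i x \<noteq> 0" using Rsupp unfolding supp_def by blast
    have "x - m j \<in> Lk \<alpha> (i - j)" using F4[of j i] i unfolding supp_def by auto
    moreover have "1 \<le> i - j" using i(1) by simp
    ultimately have "x - m j \<in> Lk \<alpha> 1" using Lk_mono[of 1 "i - j" \<alpha>] by blast
    thus "\<exists>b\<in>supp (R j). x - b \<in> Lk \<alpha> 1" using RIn by blast
  qed
  have GC: "geom_conv \<alpha> X T" unfolding geom_conv_def using RW RP unfolding R_def by blast
  have Tg: "grid_based T"
  proof (rule grid2[OF ratio, of _ "mag T0" "m 0"], rule ballI)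
    fix x assume "x \<in> supp T"
    hence ne: "X (N x) x \<noteq> 0" unfolding supp_def T_def by simp
    show "x - mag T0 \<in> Lk \<alpha> 0 \<or> x - m 0 \<in> Lk \<alpha> 0"
    proof (cases "T0 x = 0")
      case False
      thus ?thesis using witD[OF T0(2)] unfolding supp_def by auto
    next
      case True
      hence "(\<Sum>i\<in>{0..<N x}. D i x) \<noteq> 0" using tele[of 0 "N x" x] ne X0 by simp
      then obtain i where "D i x \<noteq> 0" by (rule sum.not_neutral_contains_not_neutral)
      thus ?thesis using F5[of 0 i] unfolding supp_def by auto
    qed
  qed
  have TA: "T \<in> \<A>" using c[of X T] XA Tg GC by blast
  have "\<Phi> T = T"
  proof (rule ext, rule ccontr)
    fix g assume ne: "\<Phi> T g \<noteq> T g"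
    have "\<forall>k. g - m 0 \<in> Lk \<alpha> k"
    proof
      fix k
      have bb: "ser_prec \<alpha> (\<Phi> T - \<Phi> (X k)) (R k)" using b[OF TA XA] RW[of k] unfolding R_def by blast
      have "(\<Phi> T - X (Suc k)) g \<noteq> 0 \<or> R (Suc k) g \<noteq> 0" using ne by (auto simp: R_def)
      then have "g - m 0 \<in> Lk \<alpha> (Suc k)"
      proof
        assume "(\<Phi> T - X (Suc k)) g \<noteq> 0"
        hence "g \<in> supp (\<Phi> T - \<Phi> (X k))" by (simp add: supp_def XS)
        then obtain b' where b': "b' \<in> supp (R k)" "g - b' \<in> Lk \<alpha> 1"
          using bb unfolding ser_prec_def mono_prec_def mplus_Lk by blast
        have "(b' - m 0) + (g - b') \<in> Lk \<alpha> (k + 1)" using Rsub b' by (intro Lk_add) auto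
        thus "g - m 0 \<in> Lk \<alpha> (Suc k)" by (simp add: algebra_simps)
      next
        assume "R (Suc k) g \<noteq> 0"
        thus "g - m 0 \<in> Lk \<alpha> (Suc k)" using Rsub unfolding supp_def by blast
      qed
      thus "g - m 0 \<in> Lk \<alpha> k" using Lk_mono[of k "Suc k" \<alpha>] by auto
    qed
    thus False by (rule Lk_fin[OF ratio])
  qed
  thus ?thesis using TA by metis
qed

end
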